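(* Let $p$ and $q$ be two distinct odd primes and let $\delta$ be a positive divisor of $\lambda(pq)$. Then $$\sum_{\substack{a\in U_{pq}\\ \mathrm{ind}_{pq}(a)=\delta}}a\equiv \mu\big((\delta,p-1)\big)\, I\!\left(\Big(\frac{\delta}{(\delta,p-1)},\,p-1\Big)\right)\frac{\phi(\delta)}{\phi((\delta,p-1))}\pmod p.$$
   Context: $U_m$ denotes the set of invertible residue classes in $\mathbb{Z}/m\mathbb{Z}$ (the sum runs over one representative of each such class). For $a$ coprime to $m$, $\mathrm{ind}_m(a)$ is the multiplicative order of $a$ modulo $m$. $\lambda(m)$ is the Carmichael function: the smallest $k>0$ such that $a^k\equiv 1\pmod m$ for all $a\in U_m$. $\mu$ is the Möbius function, $\phi$ Euler's totient function, $(x,y)$ the greatest common divisor, and $I(n)=\lfloor 1/n\rfloor$ for positive integers $n$ (so $I(1)=1$ and $I(n)=0$ for $n>1$). *)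

theory Defs
  imports "HOL-Number_Theory.Number_Theory" "HOL-Computational_Algebra.Squarefree"
begin

definition moebius_mu :: "nat \<Rightarrow> int" where
  "moebius_mu n = (if n = 0 then 0 else if squarefree n then (-1) ^ card (prime_factors n) else 0)"

definition carmichael :: "nat \<Rightarrow> nat" where
  "carmichael m = (LEAST k. k > 0 \<and> (\<forall>a. coprime a m \<longrightarrow> [a ^ k = 1] (mod m)))"

definition Ifl :: "nat \<Rightarrow> int" where
  "Ifl n = \<lfloor>1 / real n\<rfloor>"

end

theory Submission
  imports Defs
begin


definition fF :: "nat \<Rightarrow> nat \<Rightarrow> int" where
  "fF n d = moebius_mu (gcd d n) * Ifl (gcd (d div gcd d n) n) * int (totient d div totient (gcd d n))"

lemma Ifl_1 [simp]: "Ifl 1 = 1" by (simp add: Ifl_def)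
lemma Ifl_gt1: "k > 1 \<Longrightarrow> Ifl k = 0"
  unfolding Ifl_def by (intro floor_unique) (auto simp: field_simps)

lemma mu_1 [simp]: "moebius_mu 1 = 1" by (simp add: moebius_mu_def)
lemma mu_Suc0 [simp]: "moebius_mu (Suc 0) = 1" by (simp add: moebius_mu_def)
lemma Ifl_Suc0 [simp]: "Ifl (Suc 0) = 1" by (simp add: Ifl_def)

lemma mu_mult_prime:
  fixes l g :: nat
  assumes "prime l" "\<not> l dvd g" "g > 0"
  shows "moebius_mu (l * g) = - moebius_mu g"
proof -
  have cop: "coprime l g" using assms by (simp add: prime_imp_coprime)
  have sq: "squarefree (l * g) \<longleftrightarrow> squarefree g"
    using squarefree_mult_coprime[OF cop squarefree_prime[OF assms(1)]] squarefree_mono[of g "l*g"] by auto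
  have pf: "prime_factors (l * g) = insert l (prime_factors g)"
    using assms prime_factors_product[of l g] prime_prime_factors[of l] by (auto simp: prime_gt_0_nat)
  have "l \<notin> prime_factors g" using assms by auto
  hence "card (prime_factors (l * g)) = Suc (card (prime_factors g))" by (simp add: pf)
  hence c: "card (prime_factors (l * g)) = Suc (card (prime_factors g))" .
  have lg: "l * g \<noteq> 0" using assms by (simp add: prime_gt_0_nat)
  show ?thesis
  proof (cases "squarefree g")
    case True
    thus ?thesis unfolding moebius_mu_def using lg sq c assms(3) by (simp only: if_False if_True power_Suc) simp
  next
    case False
    thus ?thesis unfolding moebius_mu_def using lg sq assms(3) by simp
  qed
qed

lemma mu_sq: "prime (l::nat) \<Longrightarrow> l^2 dvd g \<Longrightarrow> moebius_mu g = 0"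
proof -
  assume l: "prime l" "l^2 dvd g"
  have "\<not> l dvd 1" using l(1) by (metis not_prime_unit)
  hence "\<not> squarefree g" using not_squarefreeI[of l g] l(2) by blast
  thus ?thesis unfolding moebius_mu_def by simp
qed

lemma fF_coprime: "coprime d n \<Longrightarrow> fF n d = int (totient d)"
  by (simp add: fF_def)

lemma fF_mult:
  fixes l n d :: nat
  assumes l: "prime l" "l dvd n" "\<not> l dvd d" and d: "d > 0" and n: "n > 0"
  shows "fF n (l * d) = - fF n d"
proof -
  have cop: "coprime l d" using l by (simp add: prime_imp_coprime)
  have g: "gcd (l * d) n = l * gcd d n"
  proof -
    obtain m where m: "n = l * m" using l by (auto elim: dvdE)
    have "gcd d (l * m) = gcd d m" using cop by (metis gcd_mult_right_left_cancel coprime_commute)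
    thus ?thesis using m by (metis gcd_mult_distrib_nat)
  qed
  have ndvd: "\<not> l dvd gcd d n" using l(3) by (meson dvd_trans gcd_dvd1)
  have gpos: "gcd d n > 0" using n by simp
  have mu: "moebius_mu (gcd (l * d) n) = - moebius_mu (gcd d n)"
    unfolding g by (rule mu_mult_prime[OF l(1) ndvd gpos])
  have l0: "l \<noteq> 0" using l(1) by auto
  have e: "l * d div gcd (l * d) n = d div gcd d n" unfolding g using l0 by (rule div_mult_mult1)
  have cop2: "coprime l (gcd d n)" using l by (simp add: prime_imp_coprime)
  have t: "totient (l * d) div totient (gcd (l * d) n) = totient d div totient (gcd d n)"
  proof -
    have l1: "totient l > 0" using l(1) by (simp add: prime_gt_0_nat)
    have "totient (l * d) = totient l * totient d" using cop by (rule totient_mult_coprime)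
    moreover have "totient (gcd (l * d) n) = totient l * totient (gcd d n)"
      unfolding g using cop2 by (rule totient_mult_coprime)
    ultimately show ?thesis using l1 by (metis div_mult_mult1 neq0_conv)
  qed
  have "fF n (l*d) = moebius_mu (gcd (l*d) n) * Ifl (gcd (l*d div gcd (l*d) n) n) * int (totient (l*d) div totient (gcd (l*d) n))" by (simp only: fF_def)
  also have "\<dots> = (- moebius_mu (gcd d n)) * Ifl (gcd (d div gcd d n) n) * int (totient d div totient (gcd d n))" by (simp only: mu e t)
  also have "\<dots> = - fF n d" unfolding fF_def by (simp only: mult_minus_left)
  finally show ?thesis .
qed

lemma fF_zero:
  fixes l n d :: nat
  assumes l: "prime l" "l dvd n" "l^2 dvd d" and d: "d > 0" and n: "n > 0"
  shows "fF n d = 0"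
proof (cases "l^2 dvd gcd d n")
  case True
  hence "moebius_mu (gcd d n) = 0" using mu_sq[OF l(1)] by blast
  thus ?thesis by (simp add: fF_def)
next
  case False
  define g where "g = gcd d n"
  have ld: "l dvd d" using l(3) by (metis dvd_power dvd_trans pos2 prime_gt_0_nat l(1) power_eq_0_iff zero_neq_numeral) 
  have lg: "l dvd g" unfolding g_def using ld l(2) by simp
  then obtain g1 where g1: "g = l * g1" by (auto elim: dvdE)
  have ng1: "\<not> l dvd g1" using False g1 unfolding g_def[symmetric] by (auto simp: power2_eq_square)
  have gd: "g dvd d" unfolding g_def by simp
  have dd: "d = g * (d div g)" using gd by simp
  have "l * l dvd l * (g1 * (d div g))" using l(3) dd g1 by (simp add: power2_eq_square mult.assoc)
  hence "l dvd g1 * (d div g)" using l(1) by (simp add: prime_gt_0_nat)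
  hence "l dvd d div g" using ng1 l(1) prime_dvd_mult_iff by blast
  hence "l dvd gcd (d div g) n" using l(2) by simp
  moreover have "gcd (d div g) n > 0" using n by simp
  ultimately have "gcd (d div g) n \<ge> l" by (simp add: dvd_imp_le)
  hence "gcd (d div g) n > 1" using prime_gt_1_nat[OF l(1)] by linarith
  hence "Ifl (gcd (d div g) n) = 0" by (rule Ifl_gt1)
  thus ?thesis unfolding fF_def g_def by simp
qed

lemma fF_divsum:
  fixes n k :: nat
  assumes n: "n > 0" and k: "k > 0"
  shows "(\<Sum>d | d dvd k. fF n d) = (if coprime k n then int k else 0)"
proof (cases "coprime k n")
  case True
  have "(\<Sum>d | d dvd k. fF n d) = (\<Sum>d | d dvd k. int (totient d))"
  proof (rule sum.cong)
    fix d assume "d \<in> {d. d dvd k}"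
    hence "coprime d n" using True by (auto intro: coprime_imp_coprime dest: dvd_trans)
    thus "fF n d = int (totient d)" by (rule fF_coprime)
  qed simp
  also have "\<dots> = int (\<Sum>d | d dvd k. totient d)" by simp
  also have "\<dots> = int k" by (simp only: totient_divisor_sum)
  finally show ?thesis using True by simp
next
  case False
  then obtain l where l: "prime l" "l dvd k" "l dvd n"
    by (metis coprime_absorb_left dvd_refl gcd_dvd1 gcd_dvd2 prime_factor_nat coprime_iff_gcd_eq_1 dvd_trans)
  define D where "D = {d. d dvd k}"
  define A where "A = {d\<in>D. \<not> l dvd d}"
  define B where "B = {d\<in>D. l dvd d \<and> \<not> l^2 dvd d}"
  define C where "C = {d\<in>D. l^2 dvd d}"
  have finD: "finite D" unfolding D_def using k by simp
  have DABC: "D = A \<union> (B \<union> C)" unfolding A_def B_def C_def by auto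
  have sumC: "sum (fF n) C = 0"
  proof (rule sum.neutral, rule ballI)
    fix d assume d: "d \<in> C"
    have "d > 0" using d k by (auto simp: C_def D_def intro: Nat.gr0I)
    thus "fF n d = 0" using d by (intro fF_zero[OF l(1) l(3) _ _ n]) (auto simp: C_def)
  qed
  have bij: "bij_betw (\<lambda>d. l * d) A B"
  proof (rule bij_betwI[where g = "\<lambda>d. d div l"])
    show "(\<lambda>d. l * d) \<in> A \<rightarrow> B"
    proof
      fix d assume d: "d \<in> A"
      have "coprime l d" using d l(1) by (simp add: A_def prime_imp_coprime)
      hence "l * d dvd k" using d l(2) by (simp add: A_def D_def divides_mult)
      moreover have "\<not> l^2 dvd l * d" using d l(1) by (auto simp: A_def power2_eq_square prime_gt_0_nat)
      ultimately show "l * d \<in> B" by (simp add: B_def D_def)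
    qed
    show "(\<lambda>d. d div l) \<in> B \<rightarrow> A"
    proof
      fix d assume d: "d \<in> B"
      then obtain e where e: "d = l * e" by (auto simp: B_def elim: dvdE)
      have "e dvd k" using d e by (auto simp: B_def D_def intro: dvd_mult_left)
      moreover have "\<not> l dvd e" using d e by (auto simp: B_def power2_eq_square)
      ultimately show "d div l \<in> A" using e l(1) by (simp add: A_def D_def prime_gt_0_nat)
    qed
  qed (use l(1) in \<open>auto simp: B_def prime_gt_0_nat\<close>)
  have sumB: "sum (fF n) B = - sum (fF n) A"
  proof -
    have "sum (fF n) B = sum (\<lambda>d. fF n (l * d)) A"
      using sum.reindex_bij_betw[OF bij, of "fF n"] by simp
    also have "\<dots> = sum (\<lambda>d. - fF n d) A"
    proof (rule sum.cong)
      fix d assume d: "d \<in> A"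
      have "d > 0" using d k by (auto simp: A_def D_def intro: Nat.gr0I)
      thus "fF n (l * d) = - fF n d" using d by (intro fF_mult l n) (auto simp: A_def)
    qed simp
    finally show ?thesis by (simp add: sum_negf)
  qed
  have "sum (fF n) D = sum (fF n) A + (sum (fF n) B + sum (fF n) C)"
    unfolding DABC using finD unfolding DABC
    by (subst sum.union_disjoint; (auto simp: A_def B_def C_def)?)+ 
  also have "\<dots> = 0" using sumB sumC by simp
  finally show ?thesis using False by (simp add: D_def)
qed



lemma carm_eq:
  assumes "m > 0" shows "carmichael m = Carmichael m"
  unfolding carmichael_def
proof (rule Least_equality)
  show "0 < Carmichael m \<and> (\<forall>a. coprime a m \<longrightarrow> [a ^ Carmichael m = 1] (mod m))"
  proof (intro conjI allI impI)
    fix a assume "coprime a m"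
    thus "[a ^ Carmichael m = 1] (mod m)" by (intro Carmichael_divides) (auto simp: coprime_commute)
  qed simp
next
  fix k assume k: "0 < k \<and> (\<forall>a. coprime a m \<longrightarrow> [a ^ k = 1] (mod m))"
  obtain g where g: "g \<in> totatives m" "ord m g = Carmichael m"
    using Carmichael_root_exists[OF assms] by blast
  have "coprime g m" using g by (simp add: totatives_def)
  hence "[g ^ k = 1] (mod m)" using k by blast
  hence "Carmichael m dvd k" using g ord_divides by metis
  thus "Carmichael m \<le> k" using k by (simp add: dvd_imp_le)
qed

lemma carm_pq:
  assumes "prime p" "prime q" "p \<noteq> q"
  shows "carmichael (p * q) = lcm (p - 1) (q - 1)"
proof -
  have "coprime p q" using assms by (simp add: primes_coprime)
  moreover have "p * q > 0" using assms by (simp add: prime_gt_0_nat)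
  ultimately show ?thesis using assms
    by (simp add: carm_eq Carmichael_mult_coprime Carmichael_prime)
qed

lemma roots_card:
  assumes q: "prime q" and k: "k dvd q - 1" "k > 0"
  shows "card {y\<in>{..<q}. [y ^ k = 1] (mod q)} = k"
proof -
  have q1: "q > 1" using prime_gt_1_nat[OF q] .
  have c: "card {x\<in>totatives q. ord q x = k} = totient k"
    using prime_card_elements_with_ord_eq_totient[OF q1 q, of k] k by simp
  hence "card {x\<in>totatives q. ord q x = k} \<noteq> 0" using k by simp
  hence "{x\<in>totatives q. ord q x = k} \<noteq> {}" by (metis card.empty)
  then obtain a where a: "a \<in> totatives q" "ord q a = k" by blast
  show ?thesis
  proof (cases "a = 1")
    case True
    hence k1: "k = 1" using a by simp
    have "{y\<in>{..<q}. [y ^ k = 1] (mod q)} = {1}"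
      using q1 k1 by (auto simp: cong_def)
    thus ?thesis using k1 by simp
  next
    case False
    have ne: "card {x\<in>totatives q. ord q x = k} \<noteq> 0" using c k by simp
    have "{y\<in>{..<q}. [y ^ k = 1] (mod q)} = (\<lambda>i. a ^ i mod q) ` {..<k}"
      using prime_elements_with_ord(2)[OF q1 ne q a False] .
    moreover have "inj_on (\<lambda>i. a ^ i mod q) {..<k}"
      using prime_elements_with_ord(1)[OF q1 ne q a False] .
    ultimately show ?thesis by (simp add: card_image)
  qed
qed

lemma root_exists:
  assumes p: "prime p" and g: "g dvd p - 1" "g > 1"
  obtains z where "z < p" "z \<noteq> 1" "ord p z = g" "coprime z p"
proof -
  have p1: "p > 1" using prime_gt_1_nat[OF p] .
  have c: "card {x\<in>totatives p. ord p x = g} = totient g"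
    using prime_card_elements_with_ord_eq_totient[OF p1 p, of g] g by simp
  hence "card {x\<in>totatives p. ord p x = g} \<noteq> 0" using g by simp
  hence "{x\<in>totatives p. ord p x = g} \<noteq> {}" by (metis card.empty)
  then obtain a where a: "a \<in> totatives p" "ord p a = g" by blast
  have "a \<noteq> 1" using a g by auto
  moreover have "coprime a p" using a by (simp add: totatives_def)
  moreover have "a < p" using a p1 by (metis totatives_less)
  ultimately show ?thesis using that a by blast
qed

lemma roots_p_one:
  assumes p: "prime p" and k: "k > 0" "coprime k (p - 1)"
  shows "{x\<in>{..<p}. [x ^ k = 1] (mod p)} = {1}"
proof (intro equalityI subsetI)
  have p1: "p > 1" using prime_gt_1_nat[OF p] .
  fix x assume x: "x \<in> {x\<in>{..<p}. [x ^ k = 1] (mod p)}"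
  hence xo: "ord p x dvd k" using ord_divides[of x k p] by simp
  hence "ord p x \<noteq> 0" using k by (metis dvd_0_left_iff neq0_conv)
  hence "coprime p x" using ord_eq_0[of p x] by simp
  have "\<not> p dvd x"
  proof
    assume "p dvd x"
    hence "is_unit p" using coprime_common_divisor[OF \<open>coprime p x\<close> dvd_refl] by simp
    thus False using p1 by simp
  qed
  hence "[x ^ (p - 1) = 1] (mod p)" by (rule fermat_theorem[OF p])
  hence "ord p x dvd p - 1" using ord_divides[of x "p - 1" p] by simp
  hence "ord p x dvd gcd k (p - 1)" using xo by simp
  moreover have "gcd k (p - 1) = 1" using k(2) by (rule coprime_imp_gcd_eq_1)
  ultimately have "ord p x = 1" by (metis nat_dvd_1_iff_1)
  hence "[x = 1] (mod p)" using ord_eq_Suc_0_iff by simp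
  thus "x \<in> {1}" using x p1 by (auto intro: cong_less_modulus_unique_nat)
next
  have p1: "p > 1" using prime_gt_1_nat[OF p] .
  fix x :: nat assume "x \<in> {1}" thus "x \<in> {x\<in>{..<p}. [x ^ k = 1] (mod p)}" using p1 by simp
qed

lemma roots_p_sum_zero:
  assumes p: "prime p" and k: "k > 0" "\<not> coprime k (p - 1)"
  shows "p dvd (\<Sum>x\<in>{x\<in>{..<p}. [x ^ k = 1] (mod p)}. x)"
proof -
  have p1: "p > 1" using prime_gt_1_nat[OF p] .
  define R where "R = {x\<in>{..<p}. [x ^ k = 1] (mod p)}"
  define S where "S = (\<Sum>x\<in>R. x)"
  define g where "g = gcd k (p - 1)"
  have g1: "g > 1" using k unfolding g_def coprime_iff_gcd_eq_1
    by (metis gcd_pos_nat less_one nat_neq_iff)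
  have gd: "g dvd p - 1" unfolding g_def by simp
  obtain z where z: "z < p" "z \<noteq> 1" "ord p z = g" "coprime z p"
    using root_exists[OF p gd g1] by blast
  have zk: "[z ^ k = 1] (mod p)" using z(3) ord_divides g_def by (metis gcd_dvd1)
  have z0: "z \<noteq> 0"
  proof
    assume "z = 0"
    hence "is_unit p" using z(4) coprime_common_divisor[of z p p] by simp
    thus False using p1 by simp
  qed
  define h where "h x = z * x mod p" for x
  have finR: "finite R" unfolding R_def by simp
  have hR: "h ` R \<subseteq> R"
  proof
    fix y assume "y \<in> h ` R"
    then obtain x where x: "x \<in> R" "y = h x" by blast
    have "[(z * x mod p) ^ k = (z * x) ^ k] (mod p)" by (intro cong_pow) (simp add: cong_def)
    also have "(z * x) ^ k = z ^ k * x ^ k" by (simp add: power_mult_distrib)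
    also have "[z ^ k * x ^ k = 1 * 1] (mod p)" using zk x(1) by (intro cong_mult) (auto simp: R_def)
    finally show "y \<in> R" using x p1 by (simp add: R_def h_def)
  qed
  have inj: "inj_on h R"
  proof
    fix x y assume xy: "x \<in> R" "y \<in> R" "h x = h y"
    hence "[z * x = z * y] (mod p)" by (simp add: h_def cong_def)
    hence "[x = y] (mod p)" using cong_mult_lcancel_nat[OF z(4)] by simp
    thus "x = y" using xy by (auto simp: R_def intro: cong_less_modulus_unique_nat)
  qed
  have hRR: "h ` R = R" using endo_inj_surj[OF finR hR inj] .
  have "S = sum h R"
    unfolding S_def using sum.reindex[OF inj, of "\<lambda>x. x"] hRR by simp
  also have "[sum h R = sum (\<lambda>x. z * x) R] (mod p)"
    by (intro cong_sum) (simp add: h_def cong_def)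
  also have "sum (\<lambda>x. z * x) R = z * S" by (simp add: S_def sum_distrib_left)
  finally have c: "[z * S = S] (mod p)" by (rule cong_sym)
  have "S \<le> z * S" using z0 by simp
  hence "p dvd z * S - S" using c cong_altdef_nat[of S "z * S" p] by simp
  hence "p dvd (z - 1) * S" by (simp add: diff_mult_distrib)
  hence "p dvd z - 1 \<or> p dvd S" by (simp add: prime_dvd_mult_iff[OF p])
  moreover have "\<not> p dvd z - 1"
  proof
    assume "p dvd z - 1"
    moreover have "z - 1 > 0" "z - 1 < p" using z z0 by auto
    ultimately show False by (meson dvd_imp_le not_le)
  qed
  ultimately show ?thesis unfolding S_def R_def by blast
qed



lemma crt_sum:
  fixes p q k :: nat
  assumes p: "prime p" and q: "prime q" and pq: "p \<noteq> q"
  shows "[(\<Sum>a\<in>{a\<in>{..<p*q}. [a ^ k = 1] (mod p*q)}. a)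
          = (\<Sum>x\<in>{x\<in>{..<p}. [x ^ k = 1] (mod p)}. x) * card {y\<in>{..<q}. [y ^ k = 1] (mod q)}] (mod p)"
proof -
  define A where "A = {a\<in>{..<p*q}. [a ^ k = 1] (mod p*q)}"
  define Rp where "Rp = {x\<in>{..<p}. [x ^ k = 1] (mod p)}"
  define Rq where "Rq = {y\<in>{..<q}. [y ^ k = 1] (mod q)}"
  have cop: "coprime p q" using p q pq by (simp add: primes_coprime)
  have p0: "p > 0" and q0: "q > 0" using p q by (auto simp: prime_gt_0_nat)
  have key: "[a ^ k = 1] (mod p*q) \<longleftrightarrow> [(a mod p) ^ k = 1] (mod p) \<and> [(a mod q) ^ k = 1] (mod q)" for a
  proof -
    have e1: "[(a mod p) ^ k = 1] (mod p) \<longleftrightarrow> [a ^ k = 1] (mod p)"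
      by (simp add: cong_def power_mod)
    have e2: "[(a mod q) ^ k = 1] (mod q) \<longleftrightarrow> [a ^ k = 1] (mod q)"
      by (simp add: cong_def power_mod)
    show ?thesis unfolding e1 e2
      using cong_modulus_mult_nat[of "a^k" 1 p q] cong_modulus_mult_nat[of "a^k" 1 q p]
            coprime_cong_mult_nat[OF _ _ cop, of "a^k" 1]
      by (auto simp: mult.commute)
  qed
  define f where "f a = (a mod p, a mod q)" for a
  have inj: "inj_on f A"
  proof
    fix a b assume ab: "a \<in> A" "b \<in> A" "f a = f b"
    hence "[a = b] (mod p)" "[a = b] (mod q)" by (auto simp: f_def cong_def)
    hence "[a = b] (mod p * q)" using coprime_cong_mult_nat[OF _ _ cop] by blast
    thus "a = b" using ab by (auto simp: A_def intro: cong_less_modulus_unique_nat)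
  qed
  have img: "f ` A = Rp \<times> Rq"
  proof (intro equalityI subsetI)
    fix z assume "z \<in> f ` A"
    then obtain a where a: "a \<in> A" "z = f a" by blast
    thus "z \<in> Rp \<times> Rq" using key[of a] p0 q0 by (auto simp: A_def Rp_def Rq_def f_def)
  next
    fix z assume z: "z \<in> Rp \<times> Rq"
    then obtain x y where xy: "z = (x, y)" "x \<in> Rp" "y \<in> Rq" by blast
    obtain c where c: "[c = x] (mod p)" "[c = y] (mod q)"
      using binary_chinese_remainder_nat[OF cop] by blast
    define a where "a = c mod (p * q)"
    have am: "a mod p = x" "a mod q = y" using c xy
      by (auto simp: a_def cong_def Rp_def Rq_def mod_mod_cancel)
    have "a < p * q" using p0 q0 by (simp add: a_def)
    hence "a \<in> A" using key[of a] am xy by (simp add: A_def Rp_def Rq_def)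
    thus "z \<in> f ` A" using am xy by (auto simp: f_def)
  qed
  have "[(\<Sum>a\<in>A. a) = (\<Sum>a\<in>A. a mod p)] (mod p)"
    by (intro cong_sum) (simp add: cong_def)
  also have "(\<Sum>a\<in>A. a mod p) = (\<Sum>a\<in>A. fst (f a))" by (simp add: f_def)
  also have "\<dots> = (\<Sum>z\<in>f ` A. fst z)" using sum.reindex[OF inj, of fst] by simp
  also have "\<dots> = (\<Sum>z\<in>Rp \<times> Rq. fst z)" using img by simp
  also have "\<dots> = (\<Sum>x\<in>Rp. \<Sum>y\<in>Rq. x)" unfolding sum.cartesian_product by (simp add: case_prod_unfold)
  also have "\<dots> = (\<Sum>x\<in>Rp. x * card Rq)" by (simp add: mult.commute)
  also have "\<dots> = (\<Sum>x\<in>Rp. x) * card Rq" by (rule sum_distrib_right[symmetric])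
  finally show ?thesis unfolding A_def Rp_def Rq_def .
qed


lemma T_split:
  fixes m k :: nat
  assumes k: "k > 0"
  shows "(\<Sum>a\<in>{a\<in>{..<m}. [a ^ k = 1] (mod m)}. a)
       = (\<Sum>d | d dvd k. \<Sum>a\<in>{a\<in>{0..<m}. coprime a m \<and> ord m a = d}. a)"
proof -
  have eq: "{a\<in>{..<m}. [a ^ k = 1] (mod m)} = (\<Union>d\<in>{d. d dvd k}. {a\<in>{0..<m}. coprime a m \<and> ord m a = d})"
  proof (intro equalityI subsetI)
    fix a assume a: "a \<in> {a\<in>{..<m}. [a ^ k = 1] (mod m)}"
    hence o: "ord m a dvd k" using ord_divides[of a k m] by simp
    hence "ord m a \<noteq> 0" using k by (metis dvd_0_left_iff neq0_conv)
    hence "coprime m a" using ord_eq_0[of m a] by simp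
    thus "a \<in> (\<Union>d\<in>{d. d dvd k}. {a\<in>{0..<m}. coprime a m \<and> ord m a = d})"
      using a o by (auto simp: coprime_commute)
  next
    fix a assume "a \<in> (\<Union>d\<in>{d. d dvd k}. {a\<in>{0..<m}. coprime a m \<and> ord m a = d})"
    thus "a \<in> {a\<in>{..<m}. [a ^ k = 1] (mod m)}" using ord_divides[of a k m] by auto
  qed
  show ?thesis unfolding eq
    by (rule sum.UNION_disjoint) (use k in auto)
qed

lemma dvd_lcm_coprime:
  fixes k a b :: nat
  assumes "k dvd lcm a b" "coprime k a"
  shows "k dvd b"
proof -
  have "lcm a b dvd a * b" by (rule lcm_least) simp_all
  hence "k dvd a * b" using assms(1) by (rule dvd_trans[rotated])
  thus ?thesis using assms(2) by (simp add: coprime_dvd_mult_right_iff)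
qed

theorem theorem1p9:
  fixes p q \<delta> :: nat
  assumes "prime p" "prime q" "odd p" "odd q" "p \<noteq> q"
    and "\<delta> > 0" "\<delta> dvd carmichael (p * q)"
  shows "[int (\<Sum>a \<in> {a \<in> {0..<p * q}. coprime a (p * q) \<and> ord (p * q) a = \<delta>}. a)
          = moebius_mu (gcd \<delta> (p - 1)) * Ifl (gcd (\<delta> div gcd \<delta> (p - 1)) (p - 1))
            * int (totient \<delta> div totient (gcd \<delta> (p - 1)))] (mod int p)"
proof -
  note p = assms(1) and q = assms(2) and pq = assms(5)
  define L where "L = lcm (p - 1) (q - 1)"
  have L: "carmichael (p * q) = L" unfolding L_def by (rule carm_pq[OF p q pq])
  define n where "n = p - 1"
  have n0: "n > 0" unfolding n_def using prime_gt_1_nat[OF p] by simp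
  define S where "S d = (\<Sum>a \<in> {a \<in> {0..<p * q}. coprime a (p * q) \<and> ord (p * q) a = d}. a)" for d
  define T where "T k = (\<Sum>a\<in>{a\<in>{..<p*q}. [a ^ k = 1] (mod p*q)}. a)" for k
  have TS: "T k = (\<Sum>d | d dvd k. S d)" if "k > 0" for k
    unfolding T_def S_def by (rule T_split[OF that])
  have Tval: "[int (T k) = (if coprime k n then int k else 0)] (mod int p)" if k: "k > 0" "k dvd L" for k
  proof -
    have c: "[T k = (\<Sum>x\<in>{x\<in>{..<p}. [x ^ k = 1] (mod p)}. x) * card {y\<in>{..<q}. [y ^ k = 1] (mod q)}] (mod p)"
      unfolding T_def by (rule crt_sum[OF p q pq])
    show ?thesis
    proof (cases "coprime k n")
      case True
      have r1: "{x\<in>{..<p}. [x ^ k = 1] (mod p)} = {1}"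
        using roots_p_one[OF p k(1)] True by (simp add: n_def)
      have "k dvd q - 1" using dvd_lcm_coprime[of k "p - 1" "q - 1"] k True by (simp add: L_def n_def)
      hence r2: "card {y\<in>{..<q}. [y ^ k = 1] (mod q)} = k" using roots_card[OF q] k by simp
      have "[T k = k] (mod p)" using c r1 r2 by simp
      hence "[int (T k) = int k] (mod int p)" by (simp add: cong_int_iff)
      thus ?thesis using True by simp
    next
      case False
      have "p dvd (\<Sum>x\<in>{x\<in>{..<p}. [x ^ k = 1] (mod p)}. x)"
        using roots_p_sum_zero[OF p k(1)] False by (simp add: n_def)
      hence "[(\<Sum>x\<in>{x\<in>{..<p}. [x ^ k = 1] (mod p)}. x) * card {y\<in>{..<q}. [y ^ k = 1] (mod q)} = 0] (mod p)"
        by (simp add: cong_0_iff)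
      hence "[T k = 0] (mod p)" using cong_trans[OF c] by blast
      hence "[int (T k) = int 0] (mod int p)" by (simp only: cong_int_iff)
      thus ?thesis using False by simp
    qed
  qed
  have main: "d > 0 \<Longrightarrow> d dvd L \<Longrightarrow> [int (S d) = fF n d] (mod int p)" for d :: nat
  proof (induction d rule: less_induct)
    case (less d)
    define D where "D = {e. e dvd d}"
    have finD: "finite D" unfolding D_def using less.prems by simp
    have dD: "d \<in> D" unfolding D_def by simp
    have "(\<Sum>e\<in>D. int (S e)) = int (T d)" unfolding D_def TS[OF less.prems(1)] by simp
    also have "[\<dots> = (if coprime d n then int d else 0)] (mod int p)" using Tval less.prems by blast
    also have "(if coprime d n then int d else 0) = (\<Sum>e\<in>D. fF n e)"
      unfolding D_def using fF_divsum[OF n0 less.prems(1)] by simp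
    finally have all: "[(\<Sum>e\<in>D. int (S e)) = (\<Sum>e\<in>D. fF n e)] (mod int p)" .
    have rest: "[(\<Sum>e\<in>D - {d}. int (S e)) = (\<Sum>e\<in>D - {d}. fF n e)] (mod int p)"
    proof (rule cong_sum)
      fix e assume e: "e \<in> D - {d}"
      hence ed: "e dvd d" "e \<noteq> d" by (auto simp: D_def)
      hence "e > 0" using less.prems(1) by (auto intro: Nat.gr0I)
      moreover have "e < d" using ed less.prems(1) by (simp add: dvd_imp_le le_neq_implies_less)
      moreover have "e dvd L" by (rule dvd_trans[OF ed(1) less.prems(2)])
      ultimately show "[int (S e) = fF n e] (mod int p)" using less.IH by blast
    qed
    have "[int (S d) + (\<Sum>e\<in>D - {d}. int (S e)) = fF n d + (\<Sum>e\<in>D - {d}. fF n e)] (mod int p)"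
      using all unfolding sum.remove[OF finD dD] .
    hence "[int (S d) + (\<Sum>e\<in>D - {d}. fF n e) = fF n d + (\<Sum>e\<in>D - {d}. fF n e)] (mod int p)"
      using cong_add[OF cong_refl[of "int (S d)"] cong_sym[OF rest]] cong_trans cong_sym by blast
    thus ?case by (simp add: cong_add_rcancel)
  qed
  have "[int (S \<delta>) = fF n \<delta>] (mod int p)" using main assms(6,7) L by simp
  thus ?thesis unfolding S_def fF_def n_def .
qed


end
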